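(* Let $k\ge1$, $t\ge 3$, and let $S_{t-1}$ be a set of representatives of all equivalence classes of binary linear $(t-1)$-CIS $[(t-1)k,k]$ codes, each given by a generator matrix $G_C$. Let $R$ be a set of representatives of the $\sim_1$-equivalence classes of $GL(k,2)$. Let $\overline{S_t}$ be the set of codes generated by the matrices $(G_C\mid B)$ with $C\in S_{t-1}$ and $B\in R$. Then every code in $\overline{S_t}$ is a $t$-CIS $[tk,k]$ code, and every $t$-CIS $[tk,k]$ code is equivalent to some code in $\overline{S_t}$; hence, removing equivalent codes from $\overline{S_t}$ and keeping one representative of each equivalence class yields a set $S_t$ of representatives of all inequivalent $t$-CIS codes of dimension $k$.
   Context: A binary linear $[tk,k]$ code is $t$-CIS if its coordinate set can be partitioned into $t$ pairwise disjoint information sets, an information set being a set of $k$ coordinates whose columns in a generator matrix are linearly independent. Two codes are equivalent if one is obtained from the other by a permutation of coordinates. For $A,B\in GL(k,2)$, $A\sim_1B$ iff $A=BP$ for some $k\times k$ permutation matrix $P$. *)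

theory Defs
  imports "HOL-Combinatorics.Permutations"
begin

(* Binary words of length n: functions nat => bool (True = 1 in GF(2)),
   only coordinates 0..<n are meaningful.  Binary k x n matrices: nat => nat => bool,
   entry (i,j) for i<k, j<n. Addition in GF(2) is parity. *)

type_synonym word = "nat \<Rightarrow> bool"
type_synonym bmat = "nat \<Rightarrow> nat \<Rightarrow> bool"

(* The code (row space over GF(2)) generated by the k x n matrix G:
   all sums of subsets T of rows; coordinates >= n are set to 0. *)
definition code_of :: "nat \<Rightarrow> nat \<Rightarrow> bmat \<Rightarrow> word set" where
  "code_of k n G = {(\<lambda>j. j < n \<and> odd (card {i\<in>T. G i j})) | T. T \<subseteq> {..<k}}"

definition rows_indep :: "nat \<Rightarrow> nat \<Rightarrow> bmat \<Rightarrow> bool" where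
  "rows_indep k n G \<longleftrightarrow>
     (\<forall>T \<subseteq> {..<k}. (\<forall>j<n. even (card {i\<in>T. G i j})) \<longrightarrow> T = {})"

definition cols_indep :: "nat \<Rightarrow> bmat \<Rightarrow> nat set \<Rightarrow> bool" where
  "cols_indep k G I \<longleftrightarrow>
     (\<forall>J \<subseteq> I. (\<forall>i<k. even (card {j\<in>J. G i j})) \<longrightarrow> J = {})"

definition gen_matrix :: "nat \<Rightarrow> nat \<Rightarrow> word set \<Rightarrow> bmat \<Rightarrow> bool" where
  "gen_matrix n k C G \<longleftrightarrow> rows_indep k n G \<and> C = code_of k n G"

definition is_code :: "nat \<Rightarrow> nat \<Rightarrow> word set \<Rightarrow> bool" where
  "is_code n k C \<longleftrightarrow> (\<exists>G. gen_matrix n k C G)"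

definition info_set :: "nat \<Rightarrow> nat \<Rightarrow> word set \<Rightarrow> nat set \<Rightarrow> bool" where
  "info_set n k C I \<longleftrightarrow> I \<subseteq> {..<n} \<and> card I = k \<and>
     (\<exists>G. gen_matrix n k C G \<and> cols_indep k G I)"

definition is_CIS :: "nat \<Rightarrow> nat \<Rightarrow> word set \<Rightarrow> bool" where
  "is_CIS t k C \<longleftrightarrow> is_code (t * k) k C \<and>
     (\<exists>I :: nat \<Rightarrow> nat set.
        (\<forall>s<t. info_set (t * k) k C (I s)) \<and>
        (\<forall>s<t. \<forall>s'<t. s \<noteq> s' \<longrightarrow> I s \<inter> I s' = {}) \<and>
        (\<Union>s<t. I s) = {..<t * k})"

definition code_equiv :: "nat \<Rightarrow> word set \<Rightarrow> word set \<Rightarrow> bool" where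
  "code_equiv n C D \<longleftrightarrow> (\<exists>\<sigma>. \<sigma> permutes {..<n} \<and> D = (\<lambda>w. w \<circ> \<sigma>) ` C)"

definition bmult :: "nat \<Rightarrow> bmat \<Rightarrow> bmat \<Rightarrow> bmat" where
  "bmult k A B = (\<lambda>i j. odd (card {l\<in>{..<k}. A i l \<and> B l j}))"

definition bid :: bmat where
  "bid = (\<lambda>i j. i = j)"

definition mat_eq :: "nat \<Rightarrow> bmat \<Rightarrow> bmat \<Rightarrow> bool" where
  "mat_eq k A B \<longleftrightarrow> (\<forall>i<k. \<forall>j<k. A i j = B i j)"

definition in_GL :: "nat \<Rightarrow> bmat \<Rightarrow> bool" where
  "in_GL k A \<longleftrightarrow> (\<exists>B. mat_eq k (bmult k A B) bid \<and> mat_eq k (bmult k B A) bid)"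

(* A ~1 B iff A = B P for a k x k permutation matrix P, i.e. the columns of A are
   the columns of B permuted *)
definition sim1 :: "nat \<Rightarrow> bmat \<Rightarrow> bmat \<Rightarrow> bool" where
  "sim1 k A B \<longleftrightarrow> (\<exists>\<sigma>. \<sigma> permutes {..<k} \<and> (\<forall>i<k. \<forall>j<k. A i j = B i (\<sigma> j)))"

definition hconcat :: "nat \<Rightarrow> bmat \<Rightarrow> bmat \<Rightarrow> bmat" where
  "hconcat m G B = (\<lambda>i j. if j < m then G i j else B i (j - m))"

end

theory Submission
  imports Defs "HOL-Library.Z2"
begin

declare add_bit_eq_xor[simp del] mult_bit_eq_and[simp del] sum_of_bool_eq[simp del]

lemma bit_add_self[simp]: "(x::bit) + x = 0"
  by (cases x) (simp_all add: one_add_one[symmetric] del: one_add_one)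

lemma bit_cases_of_bool: "(x::bit) = of_bool (x = 1)"
  by (cases x) auto

lemma ofnat_bit: "(of_nat n :: bit) = of_bool (odd n)"
  by (induct n) (auto simp: add.commute)

lemma card_parity:
  assumes "finite A"
  shows "(of_bool (odd (card {x\<in>A. P x})) :: bit) = (\<Sum>x\<in>A. of_bool (P x))"
proof -
  have "card {x\<in>A. P x} = (\<Sum>x\<in>A. of_bool (P x) :: nat)"
    using assms by (simp add: sum_of_bool_eq Int_def conj_commute)
  hence "(of_nat (card {x\<in>A. P x}) :: bit) = (\<Sum>x\<in>A. of_bool (P x))"
    by (simp add: of_nat_sum)
  thus ?thesis by (simp add: ofnat_bit del: sum_of_bool_eq)
qed

lemma even_card_iff: "finite A \<Longrightarrow> even (card {x\<in>A. P x}) \<longleftrightarrow> (\<Sum>x\<in>A. of_bool (P x) :: bit) = 0"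
  using card_parity[of A P] by (cases "odd (card {x\<in>A. P x})") auto

lemma odd_card_iff: "finite A \<Longrightarrow> odd (card {x\<in>A. P x}) \<longleftrightarrow> (\<Sum>x\<in>A. of_bool (P x) :: bit) = 1"
  using card_parity[of A P] by (cases "odd (card {x\<in>A. P x})") auto

lemma sum_symdiff:
  fixes g :: "'a \<Rightarrow> bit"
  assumes "finite A" "finite B"
  shows "(\<Sum>x\<in>(A-B)\<union>(B-A). g x) = sum g A + sum g B"
proof -
  have "(\<Sum>x\<in>(A-B)\<union>(B-A). g x) = sum g (A-B) + sum g (B-A)"
    using assms by (intro sum.union_disjoint) auto
  moreover have "sum g A = sum g (A-B) + sum g (A\<inter>B)"
    using assms sum.union_disjoint[of "A-B" "A\<inter>B" g] by (auto simp: Un_Diff_Int)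
  moreover have "sum g B = sum g (B-A) + sum g (A\<inter>B)"
  proof -
    have "B = (B-A) \<union> (A\<inter>B)" by auto
    hence "sum g B = sum g ((B-A) \<union> (A\<inter>B))" by simp
    also have "\<dots> = sum g (B-A) + sum g (A\<inter>B)" using assms by (intro sum.union_disjoint) auto
    finally show ?thesis .
  qed
  moreover have "(sum g (A-B) + sum g (A\<inter>B)) + (sum g (B-A) + sum g (A\<inter>B))
       = sum g (A-B) + sum g (B-A) + (sum g (A\<inter>B) + sum g (A\<inter>B))" by (simp add: ac_simps)
  ultimately show ?thesis by simp
qed

lemma sum_subset_ind:
  fixes f :: "'a \<Rightarrow> bit"
  assumes "finite U" "V \<subseteq> U"
  shows "sum f V = (\<Sum>l\<in>U. of_bool (l \<in> V) * f l)"
proof -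
  have "(\<Sum>l\<in>U. of_bool (l \<in> V) * f l) = (\<Sum>l\<in>U. if l \<in> V then f l else 0)"
    by (intro sum.cong) auto
  also have "\<dots> = sum f (U \<inter> V)" using assms by (simp add: sum.inter_restrict)
  also have "U \<inter> V = V" using assms by auto
  finally show ?thesis by simp
qed
abbreviation bb :: "bool \<Rightarrow> bit" where "bb \<equiv> of_bool"

lemma bit_eq_via_one: "((x::bit) = 1 \<longleftrightarrow> y = 1) \<Longrightarrow> x = y"
  by (metis bit_not_one_iff)

lemma sq_surj:
  fixes M :: "'a \<Rightarrow> 'b \<Rightarrow> bool"
  assumes fA: "finite A" and fB: "finite B" and cAB: "card A = card B"
    and ci: "\<forall>J\<subseteq>B. (\<forall>i\<in>A. (\<Sum>j\<in>J. bb (M i j)) = 0) \<longrightarrow> J = {}"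
    and T: "T \<subseteq> A"
  shows "\<exists>J\<subseteq>B. \<forall>i\<in>A. (\<Sum>j\<in>J. bb (M i j)) = bb (i \<in> T)"
proof -
  define f where "f J = {i\<in>A. (\<Sum>j\<in>J. bb (M i j)) = 1}" for J
  have inj: "inj_on f (Pow B)"
  proof (rule inj_onI)
    fix J1 J2 assume J1: "J1 \<in> Pow B" and J2: "J2 \<in> Pow B" and e: "f J1 = f J2"
    have fin: "finite J1" "finite J2" using J1 J2 fB by (auto intro: finite_subset)
    have z: "\<forall>i\<in>A. (\<Sum>j\<in>(J1-J2)\<union>(J2-J1). bb (M i j)) = 0"
    proof
      fix i assume i: "i \<in> A"
      have "(\<Sum>j\<in>J1. bb (M i j)) = (\<Sum>j\<in>J2. bb (M i j))"
        apply (rule bit_eq_via_one) using e i unfolding f_def by (auto simp: set_eq_iff)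
      thus "(\<Sum>j\<in>(J1-J2)\<union>(J2-J1). bb (M i j)) = 0"
        using sum_symdiff[OF fin] by simp
    qed
    have sb: "(J1-J2)\<union>(J2-J1) \<subseteq> B" using J1 J2 by auto
    have "(J1-J2)\<union>(J2-J1) = {}" using ci[rule_format, OF sb] z by blast
    thus "J1 = J2" by blast
  qed
  have sub: "f ` Pow B \<subseteq> Pow A" unfolding f_def by auto
  have "card (f ` Pow B) = card (Pow A)"
    using card_image[OF inj] cAB fA fB by (simp add: card_Pow)
  hence "f ` Pow B = Pow A" using sub fA by (intro card_subset_eq) auto
  then obtain J where J: "J \<in> Pow B" "f J = T" using T by (metis Pow_iff imageE)
  show ?thesis
  proof (intro exI[of _ J] conjI ballI)
    show "J \<subseteq> B" using J by auto
    fix i assume iA: "i \<in> A"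
    have "i \<in> T \<longleftrightarrow> (\<Sum>j\<in>J. bb (M i j)) = 1" using J(2)[symmetric] iA unfolding f_def by simp
    thus "(\<Sum>j\<in>J. bb (M i j)) = bb (i \<in> T)"
      by (cases "(\<Sum>j\<in>J. bb (M i j))") simp_all
  qed
qed

lemma sq_rows:
  fixes M :: "'a \<Rightarrow> 'b \<Rightarrow> bool"
  assumes fA: "finite A" and fB: "finite B" and cAB: "card A = card B"
    and ci: "\<forall>J\<subseteq>B. (\<forall>i\<in>A. (\<Sum>j\<in>J. bb (M i j)) = 0) \<longrightarrow> J = {}"
  shows "\<forall>T\<subseteq>A. (\<forall>j\<in>B. (\<Sum>i\<in>T. bb (M i j)) = 0) \<longrightarrow> T = {}"
proof (intro allI impI)
  fix T assume T: "T \<subseteq> A" and z: "\<forall>j\<in>B. (\<Sum>i\<in>T. bb (M i j)) = 0"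
  show "T = {}"
  proof (rule ccontr)
    assume "T \<noteq> {}"
    then obtain i0 where i0: "i0 \<in> T" by auto
    obtain J where J: "J \<subseteq> B" "\<forall>i\<in>A. (\<Sum>j\<in>J. bb (M i j)) = bb (i \<in> {i0})"
      using sq_surj[OF fA fB cAB ci, of "{i0}"] i0 T by auto
    have fT: "finite T" using T fA by (rule finite_subset)
    have fJ: "finite J" using J fB by (auto intro: finite_subset)
    have "(\<Sum>i\<in>T. \<Sum>j\<in>J. bb (M i j)) = (\<Sum>i\<in>T. bb (i = i0))"
      using J T by (intro sum.cong) auto
    also have "\<dots> = 1" using i0 fT by (simp add: of_bool_def sum.delta)
    finally have 1: "(\<Sum>i\<in>T. \<Sum>j\<in>J. bb (M i j)) = 1" .
    have "(\<Sum>i\<in>T. \<Sum>j\<in>J. bb (M i j)) = (\<Sum>j\<in>J. \<Sum>i\<in>T. bb (M i j))"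
      by (rule sum.swap)
    also have "\<dots> = 0" using z J by (intro sum.neutral) auto
    finally show False using 1 by simp
  qed
qed

lemma bmult_bit: "bb (bmult k A B i j) = (\<Sum>l<k. bb (A i l) * bb (B l j))"
  unfolding bmult_def by (subst card_parity) (auto simp: of_bool_conj)

lemma bmult_assoc: "bmult k (bmult k A B) C i j = bmult k A (bmult k B C) i j"
proof -
  have "bb (bmult k (bmult k A B) C i j) = (\<Sum>l<k. (\<Sum>m<k. bb (A i m) * bb (B m l)) * bb (C l j))"
    by (simp only: bmult_bit)
  also have "\<dots> = (\<Sum>l<k. \<Sum>m<k. bb (A i m) * bb (B m l) * bb (C l j))"
    by (simp only: sum_distrib_right)
  also have "\<dots> = (\<Sum>m<k. \<Sum>l<k. bb (A i m) * bb (B m l) * bb (C l j))"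
    by (rule sum.swap)
  also have "\<dots> = (\<Sum>m<k. bb (A i m) * (\<Sum>l<k. bb (B m l) * bb (C l j)))"
    by (simp only: sum_distrib_left mult.assoc)
  also have "\<dots> = bb (bmult k A (bmult k B C) i j)"
    by (simp only: bmult_bit)
  finally show ?thesis by (simp add: of_bool_eq_iff)
qed

lemma bmult_cong: "mat_eq k A A' \<Longrightarrow> mat_eq k B B' \<Longrightarrow> mat_eq k (bmult k A B) (bmult k A' B')"
proof -
  assume a: "mat_eq k A A'" "mat_eq k B B'"
  { fix i j assume "i < k" "j < k"
    hence "{l\<in>{..<k}. A i l \<and> B l j} = {l\<in>{..<k}. A' i l \<and> B' l j}"
      using a unfolding mat_eq_def by auto
    hence "bmult k A B i j = bmult k A' B' i j" unfolding bmult_def by simp }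
  thus ?thesis unfolding mat_eq_def by blast
qed

lemma bmult_id_right: "i < k \<Longrightarrow> j < k \<Longrightarrow> bmult k A bid i j = A i j"
proof -
  assume "i < k" "j < k"
  hence "{l\<in>{..<k}. A i l \<and> bid l j} = (if A i j then {j} else {})"
    by (auto simp: bid_def)
  thus ?thesis unfolding bmult_def by simp
qed

lemma bmult_id_left: "i < k \<Longrightarrow> j < k \<Longrightarrow> bmult k bid A i j = A i j"
proof -
  assume "i < k" "j < k"
  hence "{l\<in>{..<k}. bid i l \<and> A l j} = (if A i j then {i} else {})"
    by (auto simp: bid_def)
  thus ?thesis unfolding bmult_def by simp
qed

lemma cols_indep_bit:
  "finite I \<Longrightarrow> cols_indep k G I \<longleftrightarrow> (\<forall>J\<subseteq>I. (\<forall>i\<in>{..<k}. (\<Sum>j\<in>J. bb (G i j)) = 0) \<longrightarrow> J = {})"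
proof -
  assume fI: "finite I"
  { fix J assume "J \<subseteq> I"
    hence "finite J" using fI by (rule finite_subset)
    hence "(\<forall>i<k. even (card {j\<in>J. G i j})) \<longleftrightarrow> (\<forall>i\<in>{..<k}. (\<Sum>j\<in>J. bb (G i j)) = 0)"
      by (auto simp: even_card_iff) }
  thus ?thesis unfolding cols_indep_def by blast
qed

lemma GL_cols: assumes "in_GL k B" shows "cols_indep k B {..<k}"
  unfolding cols_indep_def
proof (intro allI impI)
  fix J assume J: "J \<subseteq> {..<k}" and z: "\<forall>i<k. even (card {j \<in> J. B i j})"
  obtain B' where B': "mat_eq k (bmult k B' B) bid" using assms unfolding in_GL_def by auto
  have fJ: "finite J" using J by (auto intro: finite_subset)
  show "J = {}"
  proof (rule ccontr)
    assume "J \<noteq> {}" then obtain i where i: "i \<in> J" by auto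
    have "(\<Sum>j\<in>J. bb (bmult k B' B i j)) = (\<Sum>j\<in>J. bb (i = j))"
      using B' J i unfolding mat_eq_def bid_def by (intro sum.cong) auto
    also have "\<dots> = 1" using i fJ by (simp add: of_bool_def sum.delta)
    finally have 1: "(\<Sum>j\<in>J. bb (bmult k B' B i j)) = 1" .
    have "(\<Sum>j\<in>J. bb (bmult k B' B i j)) = (\<Sum>j\<in>J. \<Sum>l<k. bb (B' i l) * bb (B l j))"
      by (simp add: bmult_bit)
    also have "\<dots> = (\<Sum>l<k. \<Sum>j\<in>J. bb (B' i l) * bb (B l j))" by (rule sum.swap)
    also have "\<dots> = (\<Sum>l<k. bb (B' i l) * (\<Sum>j\<in>J. bb (B l j)))" by (simp add: sum_distrib_left)
    also have "\<dots> = 0"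
    proof (intro sum.neutral ballI)
      fix l assume "l \<in> {..<k}"
      hence "(\<Sum>j\<in>J. bb (B l j)) = 0" using z fJ even_card_iff[of J "B l"] by auto
      thus "bb (B' i l) * (\<Sum>j\<in>J. bb (B l j)) = 0" by simp
    qed
    finally show False using 1 by simp
  qed
qed

lemma surj_inverse:
  assumes ci: "cols_indep k X {..<k}"
  shows "\<exists>Y. mat_eq k (bmult k X Y) bid"
proof -
  have ci': "\<forall>J\<subseteq>{..<k}. (\<forall>i\<in>{..<k}. (\<Sum>j\<in>J. bb (X i j)) = 0) \<longrightarrow> J = {}"
    using ci cols_indep_bit[of "{..<k}" k X] by simp
  have "\<forall>c\<in>{..<k}. \<exists>J. J \<subseteq> {..<k} \<and> (\<forall>i\<in>{..<k}. (\<Sum>j\<in>J. bb (X i j)) = bb (i \<in> {c}))"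
  proof
    fix c assume "c \<in> {..<k}"
    show "\<exists>J. J \<subseteq> {..<k} \<and> (\<forall>i\<in>{..<k}. (\<Sum>j\<in>J. bb (X i j)) = bb (i \<in> {c}))"
      using sq_surj[OF _ _ _ ci', of "{c}"] \<open>c \<in> {..<k}\<close> by blast
  qed
  then obtain Jc where Jc: "\<forall>c\<in>{..<k}. Jc c \<subseteq> {..<k} \<and> (\<forall>i\<in>{..<k}. (\<Sum>j\<in>Jc c. bb (X i j)) = bb (i \<in> {c}))"
    by metis
  define Y where "Y j c = (j \<in> Jc c)" for j c
  have "mat_eq k (bmult k X Y) bid"
    unfolding mat_eq_def
  proof (intro allI impI)
    fix i c assume i: "i < k" and c: "c < k"
    have "bb (bmult k X Y i c) = (\<Sum>l<k. bb (X i l) * bb (l \<in> Jc c))" by (simp add: bmult_bit Y_def)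
    also have "\<dots> = (\<Sum>l\<in>Jc c. bb (X i l))"
      using sum_subset_ind[of "{..<k}" "Jc c" "\<lambda>l. bb (X i l)"] Jc c by (simp add: mult.commute)
    also have "\<dots> = bb (bid i c)" using Jc i c by (simp add: bid_def)
    finally show "bmult k X Y i c = bid i c" by (simp add: of_bool_eq_iff)
  qed
  thus ?thesis by blast
qed

lemma cols_GL: assumes ci: "cols_indep k X {..<k}" shows "in_GL k X"
proof -
  obtain Y where Y: "mat_eq k (bmult k X Y) bid" using surj_inverse[OF ci] by blast
  have ci': "\<forall>J\<subseteq>{..<k}. (\<forall>i\<in>{..<k}. (\<Sum>j\<in>J. bb (X i j)) = 0) \<longrightarrow> J = {}"
    using ci cols_indep_bit[of "{..<k}" k X] by simp
  have ri: "\<forall>T\<subseteq>{..<k}. (\<forall>j\<in>{..<k}. (\<Sum>i\<in>T. bb (X i j)) = 0) \<longrightarrow> T = {}"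
    using sq_rows[OF _ _ _ ci'] by simp
  have "cols_indep k (\<lambda>i j. X j i) {..<k}"
    using ri cols_indep_bit[of "{..<k}" k "\<lambda>i j. X j i"] by simp
  then obtain Z' where Z': "mat_eq k (bmult k (\<lambda>i j. X j i) Z') bid" using surj_inverse by blast
  define Z where "Z i j = Z' j i" for i j
  have ZX: "mat_eq k (bmult k Z X) bid"
    using Z' unfolding mat_eq_def bmult_def Z_def bid_def
    by (auto simp: conj_commute eq_commute)
  have YZ: "mat_eq k Y Z"
    unfolding mat_eq_def
  proof (intro allI impI)
    fix i j assume i: "i < k" and j: "j < k"
    have "Z i j = bmult k Z bid i j" using i j by (simp add: bmult_id_right)
    also have "\<dots> = bmult k Z (bmult k X Y) i j"
      using bmult_cong[of k Z Z bid "bmult k X Y"] Y i j by (auto simp: mat_eq_def)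
    also have "\<dots> = bmult k (bmult k Z X) Y i j" by (simp add: bmult_assoc)
    also have "\<dots> = bmult k bid Y i j"
      using bmult_cong[of k "bmult k Z X" bid Y Y] ZX i j by (auto simp: mat_eq_def)
    also have "\<dots> = Y i j" using i j by (simp add: bmult_id_left)
    finally show "Y i j = Z i j" by simp
  qed
  have "mat_eq k (bmult k Y X) bid"
    using bmult_cong[of k Y Z X X] YZ ZX by (auto simp: mat_eq_def)
  thus ?thesis using Y unfolding in_GL_def by blast
qed




definition wd :: "nat \<Rightarrow> bmat \<Rightarrow> nat set \<Rightarrow> word" where
  "wd n G T = (\<lambda>j. j < n \<and> odd (card {i\<in>T. G i j}))"

lemma code_of_alt: "code_of k n G = wd n G ` Pow {..<k}"
  unfolding code_of_def wd_def by auto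

definition Pz :: "word set \<Rightarrow> nat set \<Rightarrow> bool" where
  "Pz C I \<longleftrightarrow> (\<forall>w\<in>C. (\<forall>j\<in>I. \<not> w j) \<longrightarrow> (\<forall>j. \<not> w j))"

lemma rows_indep_bit:
  "rows_indep k n G \<longleftrightarrow> (\<forall>T\<subseteq>{..<k}. (\<forall>j\<in>{..<n}. (\<Sum>i\<in>T. bb (G i j)) = 0) \<longrightarrow> T = {})"
proof -
  { fix T :: "nat set" assume "T \<subseteq> {..<k}"
    hence "finite T" by (rule finite_subset) simp
    hence "(\<forall>j<n. even (card {i\<in>T. G i j})) \<longleftrightarrow> (\<forall>j\<in>{..<n}. (\<Sum>i\<in>T. bb (G i j)) = 0)"
      by (auto simp: even_card_iff) }
  thus ?thesis unfolding rows_indep_def by blast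
qed

lemma wd_inj:
  assumes ri: "rows_indep k n G"
  shows "inj_on (wd n G) (Pow {..<k})"
proof (rule inj_onI)
  fix T1 T2 assume T1: "T1 \<in> Pow {..<k}" and T2: "T2 \<in> Pow {..<k}" and e: "wd n G T1 = wd n G T2"
  have fin: "finite T1" "finite T2" using T1 T2 by (auto intro: finite_subset)
  have z: "\<forall>j\<in>{..<n}. (\<Sum>i\<in>(T1-T2)\<union>(T2-T1). bb (G i j)) = 0"
  proof
    fix j assume j: "j \<in> {..<n}"
    have "odd (card {i\<in>T1. G i j}) = odd (card {i\<in>T2. G i j})"
      using fun_cong[OF e, of j] j unfolding wd_def by simp
    hence "(\<Sum>i\<in>T1. bb (G i j)) = (\<Sum>i\<in>T2. bb (G i j))"
      using card_parity[OF fin(1), of "\<lambda>i. G i j"] card_parity[OF fin(2), of "\<lambda>i. G i j"] by simp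
    thus "(\<Sum>i\<in>(T1-T2)\<union>(T2-T1). bb (G i j)) = 0" using sum_symdiff[OF fin] by simp
  qed
  have sb: "(T1-T2)\<union>(T2-T1) \<subseteq> {..<k}" using T1 T2 by auto
  have "(T1-T2)\<union>(T2-T1) = {}" using ri[unfolded rows_indep_bit, rule_format, OF sb] z by blast
  thus "T1 = T2" by blast
qed

lemma card_code: "rows_indep k n G \<Longrightarrow> card (code_of k n G) = 2 ^ k"
  unfolding code_of_alt by (simp add: card_image wd_inj card_Pow)

lemma finite_code: "finite (code_of k n G)"
  unfolding code_of_alt by simp

lemma Pz_iff_cols:
  assumes ri: "rows_indep k n G" and I: "I \<subseteq> {..<n}" and cI: "card I = k"
  shows "cols_indep k G I \<longleftrightarrow> Pz (code_of k n G) I"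
proof -
  have fI: "finite I" using I by (rule finite_subset) simp
  have c1: "card {..<k} = card I" using cI by simp
  have c2: "card I = card {..<k}" using cI by simp
  define RI where "RI \<longleftrightarrow> (\<forall>T\<subseteq>{..<k}. (\<forall>j\<in>I. (\<Sum>i\<in>T. bb (G i j)) = 0) \<longrightarrow> T = {})"
  have "cols_indep k G I \<longleftrightarrow> RI"
  proof
    assume "cols_indep k G I"
    hence "\<forall>J\<subseteq>I. (\<forall>i\<in>{..<k}. (\<Sum>j\<in>J. bb (G i j)) = 0) \<longrightarrow> J = {}"
      using cols_indep_bit[OF fI] by simp
    from sq_rows[OF _ fI c1 this] show RI unfolding RI_def by simp
  next
    assume RI
    hence "\<forall>J\<subseteq>{..<k}. (\<forall>i\<in>I. (\<Sum>j\<in>J. bb ((\<lambda>a b. G b a) i j)) = 0) \<longrightarrow> J = {}"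
      unfolding RI_def by simp
    from sq_rows[OF fI _ c2 this]
    show "cols_indep k G I" using cols_indep_bit[OF fI] by simp
  qed
  also have "RI \<longleftrightarrow> Pz (code_of k n G) I"
  proof
    assume RI
    show "Pz (code_of k n G) I" unfolding Pz_def code_of_alt
    proof (intro ballI impI allI)
      fix w j assume "w \<in> wd n G ` Pow {..<k}" and v: "\<forall>j\<in>I. \<not> w j"
      then obtain T where T: "T \<subseteq> {..<k}" "w = wd n G T" by auto
      have fT: "finite T" using T by (auto intro: finite_subset)
      have "\<forall>j\<in>I. (\<Sum>i\<in>T. bb (G i j)) = 0"
        using v T I fT unfolding wd_def by (auto simp: even_card_iff[symmetric])
      hence "T = {}" using \<open>RI\<close> T unfolding RI_def by blast
      thus "\<not> w j" using T unfolding wd_def by simp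
    qed
  next
    assume P: "Pz (code_of k n G) I"
    show RI unfolding RI_def
    proof (intro allI impI)
      fix T assume T: "T \<subseteq> {..<k}" and z: "\<forall>j\<in>I. (\<Sum>i\<in>T. bb (G i j)) = 0"
      have fT: "finite T" using T by (auto intro: finite_subset)
      have "wd n G T \<in> code_of k n G" using T unfolding code_of_alt by auto
      moreover have "\<forall>j\<in>I. \<not> wd n G T j" using z fT unfolding wd_def by (auto simp: even_card_iff)
      ultimately have "\<forall>j. \<not> wd n G T j" using P unfolding Pz_def by blast
      hence "\<forall>j<n. even (card {i\<in>T. G i j})" unfolding wd_def by auto
      thus "T = {}" using ri T unfolding rows_indep_def by blast
    qed
  qed
  finally show ?thesis .
qed

lemma info_set_iff:
  assumes g: "gen_matrix n k C G"
  shows "info_set n k C I \<longleftrightarrow> I \<subseteq> {..<n} \<and> card I = k \<and> cols_indep k G I"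
proof
  assume "info_set n k C I"
  then obtain G' where I: "I \<subseteq> {..<n}" "card I = k" and G': "gen_matrix n k C G'" "cols_indep k G' I"
    unfolding info_set_def by blast
  have "Pz C I" using Pz_iff_cols[of k n G' I] G' I unfolding gen_matrix_def by simp
  hence "cols_indep k G I" using Pz_iff_cols[of k n G I] g I unfolding gen_matrix_def by simp
  thus "I \<subseteq> {..<n} \<and> card I = k \<and> cols_indep k G I" using I by simp
next
  assume "I \<subseteq> {..<n} \<and> card I = k \<and> cols_indep k G I"
  thus "info_set n k C I" using g unfolding info_set_def by blast
qed

lemma info_set_Pz:
  assumes g: "gen_matrix n k C G"
  shows "info_set n k C I \<longleftrightarrow> I \<subseteq> {..<n} \<and> card I = k \<and> Pz C I"
  using info_set_iff[OF g] Pz_iff_cols[of k n G I] g unfolding gen_matrix_def by blast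

lemma code_of_perm:
  assumes p: "\<sigma> permutes {..<n}"
  shows "code_of k n (\<lambda>i j. G i (\<sigma> j)) = (\<lambda>w. w \<circ> \<sigma>) ` code_of k n G"
proof -
  have "wd n (\<lambda>i j. G i (\<sigma> j)) T = wd n G T \<circ> \<sigma>" for T
    unfolding wd_def using permutes_in_image[OF p] by (auto simp: fun_eq_iff)
  thus ?thesis unfolding code_of_alt by (auto simp: image_image)
qed

lemma rows_indep_perm:
  assumes p: "\<sigma> permutes {..<n}" and ri: "rows_indep k n G"
  shows "rows_indep k n (\<lambda>i j. G i (\<sigma> j))"
  unfolding rows_indep_def
proof (intro allI impI)
  fix T assume T: "T \<subseteq> {..<k}" and z: "\<forall>j<n. even (card {i\<in>T. G i (\<sigma> j)})"
  have "\<forall>j<n. even (card {i\<in>T. G i j})"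
  proof (intro allI impI)
    fix j assume j: "j < n"
    have "inv \<sigma> j < n" using j permutes_in_image[OF permutes_inv[OF p]] by simp
    hence "even (card {i\<in>T. G i (\<sigma> (inv \<sigma> j))})" using z by blast
    thus "even (card {i\<in>T. G i j})" by (simp add: permutes_inverses(1)[OF p])
  qed
  thus "T = {}" using ri T unfolding rows_indep_def by blast
qed

lemma is_code_perm:
  assumes p: "\<sigma> permutes {..<n}" and c: "gen_matrix n k C G"
  shows "gen_matrix n k ((\<lambda>w. w \<circ> \<sigma>) ` C) (\<lambda>i j. G i (\<sigma> j))"
  using c rows_indep_perm[OF p] code_of_perm[OF p] unfolding gen_matrix_def by simp

lemma Pz_perm:
  assumes p: "\<sigma> permutes S" and P: "Pz C I"
  shows "Pz ((\<lambda>w. w \<circ> \<sigma>) ` C) (inv \<sigma> ` I)"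
  unfolding Pz_def
proof (intro ballI impI allI)
  fix v j assume "v \<in> (\<lambda>w. w \<circ> \<sigma>) ` C" and z: "\<forall>j\<in>inv \<sigma> ` I. \<not> v j"
  then obtain w where w: "w \<in> C" "v = w \<circ> \<sigma>" by auto
  have "\<forall>j\<in>I. \<not> w j"
  proof
    fix j assume "j \<in> I"
    hence "\<not> v (inv \<sigma> j)" using z by blast
    thus "\<not> w j" using w by (simp add: permutes_inverses(1)[OF p])
  qed
  hence "\<forall>j. \<not> w j" using P w unfolding Pz_def by blast
  thus "\<not> v j" using w by simp
qed

lemma info_set_perm:
  assumes p: "\<sigma> permutes {..<n}" and i: "info_set n k C I"
  shows "info_set n k ((\<lambda>w. w \<circ> \<sigma>) ` C) (inv \<sigma> ` I)"
proof -
  obtain G where g: "gen_matrix n k C G" using i unfolding info_set_def by blast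
  have I: "I \<subseteq> {..<n}" "card I = k" "Pz C I" using info_set_Pz[OF g] i by auto
  have pi: "inv \<sigma> permutes {..<n}" using permutes_inv[OF p] .
  have "inv \<sigma> ` I \<subseteq> {..<n}" using I(1) permutes_in_image[OF pi] by auto
  moreover have "card (inv \<sigma> ` I) = card I"
    using permutes_inj[OF pi] by (simp add: card_image inj_on_subset)
  ultimately show ?thesis
    using info_set_Pz[OF is_code_perm[OF p g]] I Pz_perm[OF p I(3)] by simp
qed

lemma code_of_cong:
  "(\<forall>i<k. \<forall>j<n. G i j = G' i j) \<Longrightarrow> code_of k n G = code_of k n G'"
proof -
  assume a: "\<forall>i<k. \<forall>j<n. G i j = G' i j"
  { fix T assume T: "T \<subseteq> {..<k}"
    have "wd n G T = wd n G' T"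
    proof
      fix j
      show "wd n G T j = wd n G' T j"
      proof (cases "j < n")
        case True
        hence "{i\<in>T. G i j} = {i\<in>T. G' i j}" using a T by auto
        thus ?thesis unfolding wd_def by simp
      qed (simp add: wd_def)
    qed }
  thus ?thesis unfolding code_of_alt by (auto intro!: image_cong)
qed

lemma rows_indep_ext:
  assumes ri: "rows_indep k m G" and mn: "m \<le> n" and a: "\<forall>i<k. \<forall>j<m. G' i j = G i j"
  shows "rows_indep k n G'"
  unfolding rows_indep_def
proof (intro allI impI)
  fix T assume T: "T \<subseteq> {..<k}" and z: "\<forall>j<n. even (card {i\<in>T. G' i j})"
  have "\<forall>j<m. even (card {i\<in>T. G i j})"
  proof (intro allI impI)
    fix j assume j: "j < m"
    hence "{i\<in>T. G i j} = {i\<in>T. G' i j}" using a T by auto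
    thus "even (card {i\<in>T. G i j})" using z j mn by simp
  qed
  thus "T = {}" using ri T unfolding rows_indep_def by blast
qed

lemma cols_indep_cong:
  "(\<forall>i<k. \<forall>j\<in>I. G i j = G' i j) \<Longrightarrow> cols_indep k G I \<longleftrightarrow> cols_indep k G' I"
proof -
  assume a: "\<forall>i<k. \<forall>j\<in>I. G i j = G' i j"
  show ?thesis unfolding cols_indep_def
  proof (intro iff_allI)
    fix J
    show "(J \<subseteq> I \<longrightarrow> (\<forall>i<k. even (card {j\<in>J. G i j})) \<longrightarrow> J = {}) =
          (J \<subseteq> I \<longrightarrow> (\<forall>i<k. even (card {j\<in>J. G' i j})) \<longrightarrow> J = {})"
    proof (cases "J \<subseteq> I")
      case True
      hence "{j\<in>J. G i j} = {j\<in>J. G' i j}" if "i < k" for i using a that by auto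
      thus ?thesis by simp
    qed simp
  qed
qed

lemma cols_indep_image:
  assumes inj: "inj_on f A"
  shows "cols_indep k H (f ` A) \<longleftrightarrow> cols_indep k (\<lambda>i j. H i (f j)) A"
proof
  assume c: "cols_indep k H (f ` A)"
  show "cols_indep k (\<lambda>i j. H i (f j)) A" unfolding cols_indep_def
  proof (intro allI impI)
    fix J assume J: "J \<subseteq> A" and z: "\<forall>i<k. even (card {j\<in>J. H i (f j)})"
    have "\<forall>i<k. even (card {j\<in>f ` J. H i j})"
    proof (intro allI impI)
      fix i assume "i < k"
      have "{j\<in>f ` J. H i j} = f ` {j\<in>J. H i (f j)}" by auto
      moreover have "inj_on f {j\<in>J. H i (f j)}" using inj J by (auto intro: inj_on_subset)
      ultimately show "even (card {j\<in>f ` J. H i j})" using z \<open>i < k\<close> by (simp add: card_image)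
    qed
    hence "f ` J = {}" using c J unfolding cols_indep_def by blast
    thus "J = {}" by simp
  qed
next
  assume c: "cols_indep k (\<lambda>i j. H i (f j)) A"
  show "cols_indep k H (f ` A)" unfolding cols_indep_def
  proof (intro allI impI)
    fix J assume J: "J \<subseteq> f ` A" and z: "\<forall>i<k. even (card {j\<in>J. H i j})"
    define J' where "J' = {x\<in>A. f x \<in> J}"
    have fJ: "f ` J' = J" using J unfolding J'_def by auto
    have "\<forall>i<k. even (card {j\<in>J'. H i (f j)})"
    proof (intro allI impI)
      fix i assume "i < k"
      have "{j\<in>J. H i j} = f ` {j\<in>J'. H i (f j)}" using fJ by auto
      moreover have "inj_on f {j\<in>J'. H i (f j)}" using inj unfolding J'_def by (auto intro: inj_on_subset)
      ultimately have eqc: "card {j\<in>J. H i j} = card {j\<in>J'. H i (f j)}" by (simp add: card_image)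
      have ev: "even (card {j\<in>J. H i j})" using z \<open>i < k\<close> by blast
      show "even (card {j\<in>J'. H i (f j)})" using ev unfolding eqc .
    qed
    moreover have "J' \<subseteq> A" unfolding J'_def by auto
    ultimately have "J' = {}" using c unfolding cols_indep_def by simp
    thus "J = {}" using fJ by simp
  qed
qed

lemma cols_shift:
  assumes "\<forall>i<k. \<forall>j<k. H i (m + j) = B i j"
  shows "cols_indep k H {m..<m+k} \<longleftrightarrow> cols_indep k B {..<k}"
proof -
  have e: "{m..<m+k} = (\<lambda>j. m + j) ` {..<k}"
    by (metis add.commute atLeast0LessThan image_add_atLeastLessThan add_0)
  have "cols_indep k H {m..<m+k} \<longleftrightarrow> cols_indep k (\<lambda>i j. H i (m + j)) {..<k}"
    unfolding e by (rule cols_indep_image) simp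
  also have "\<dots> \<longleftrightarrow> cols_indep k B {..<k}" using assms by (intro cols_indep_cong) auto
  finally show ?thesis .
qed

lemma code_equiv_refl: "code_equiv n C C"
  unfolding code_equiv_def by (intro exI[of _ id]) (auto simp: permutes_id)

lemma code_equiv_sym: "code_equiv n C D \<Longrightarrow> code_equiv n D C"
  unfolding code_equiv_def
proof (elim exE conjE)
  fix \<sigma> assume p: "\<sigma> permutes {..<n}" and D: "D = (\<lambda>w. w \<circ> \<sigma>) ` C"
  have e: "\<And>w. w \<circ> \<sigma> \<circ> inv \<sigma> = w"
    by (simp add: fun_eq_iff permutes_inverses(1)[OF p])
  have "C = (\<lambda>w. w \<circ> inv \<sigma>) ` D"
    unfolding D image_image by (simp add: e)
  thus "\<exists>\<sigma>. \<sigma> permutes {..<n} \<and> C = (\<lambda>w. w \<circ> \<sigma>) ` D" using permutes_inv[OF p] by blast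
qed

lemma code_equiv_trans: "code_equiv n C D \<Longrightarrow> code_equiv n D E \<Longrightarrow> code_equiv n C E"
  unfolding code_equiv_def
proof (elim exE conjE)
  fix \<sigma> \<rho> assume p: "\<sigma> permutes {..<n}" and D: "D = (\<lambda>w. w \<circ> \<sigma>) ` C"
    and q: "\<rho> permutes {..<n}" and E: "E = (\<lambda>w. w \<circ> \<rho>) ` D"
  have "E = (\<lambda>w. w \<circ> (\<sigma> \<circ> \<rho>)) ` C" unfolding E D image_image o_assoc by simp
  moreover have "\<sigma> \<circ> \<rho> permutes {..<n}" using permutes_compose[OF q p] .
  ultimately show "\<exists>\<sigma>. \<sigma> permutes {..<n} \<and> E = (\<lambda>w. w \<circ> \<sigma>) ` C" by blast
qed




lemma row_change:
  assumes r0: "rows_indep k m G0" and r1: "rows_indep k m K1"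
    and e: "code_of k m G0 = code_of k m K1" and mn: "m \<le> n"
  shows "\<exists>X. code_of k n (hconcat m K1 K2) = code_of k n (hconcat m G0 X)
             \<and> rows_indep k n (hconcat m G0 X)"
proof -
  have "\<forall>i\<in>{..<k}. \<exists>T. T \<subseteq> {..<k} \<and> wd m G0 {i} = wd m K1 T"
  proof
    fix i assume "i \<in> {..<k}"
    hence "wd m G0 {i} \<in> code_of k m K1" using e unfolding code_of_alt by auto
    thus "\<exists>T. T \<subseteq> {..<k} \<and> wd m G0 {i} = wd m K1 T" unfolding code_of_alt by auto
  qed
  then obtain Tf where Tf: "\<forall>i\<in>{..<k}. Tf i \<subseteq> {..<k} \<and> wd m G0 {i} = wd m K1 (Tf i)"
    by metis
  define X where "X i j = odd (card {l\<in>Tf i. K2 l j})" for i j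
  define H where "H = hconcat m K1 K2"
  define H' where "H' = hconcat m G0 X"
  have key: "bb (H' i j) = (\<Sum>l\<in>Tf i. bb (H l j))" if i: "i < k" for i j
  proof -
    have fT: "finite (Tf i)" using Tf i by (auto intro: finite_subset)
    show ?thesis
    proof (cases "j < m")
      case True
      have "wd m G0 {i} j = wd m K1 (Tf i) j" using Tf i by auto
      moreover have "wd m G0 {i} j = G0 i j"
      proof -
        have "{i'\<in>{i}. G0 i' j} = (if G0 i j then {i} else {})" by auto
        thus ?thesis unfolding wd_def using True by simp
      qed
      ultimately have "G0 i j = odd (card {l\<in>Tf i. K1 l j})" unfolding wd_def using True by simp
      thus ?thesis using True card_parity[OF fT, of "\<lambda>l. K1 l j"]
        unfolding H_def H'_def hconcat_def by simp
    next
      case False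
      thus ?thesis using card_parity[OF fT, of "\<lambda>l. K2 l (j - m)"]
        unfolding H_def H'_def hconcat_def X_def by simp
    qed
  qed
  have rH': "rows_indep k n H'" using rows_indep_ext[OF r0 mn] unfolding H'_def hconcat_def by simp
  have rH: "rows_indep k n H" using rows_indep_ext[OF r1 mn] unfolding H_def hconcat_def by simp
  have sub: "code_of k n H' \<subseteq> code_of k n H"
  proof
    fix w assume "w \<in> code_of k n H'"
    then obtain U where U: "U \<subseteq> {..<k}" "w = wd n H' U" unfolding code_of_alt by auto
    define V where "V = {l\<in>{..<k}. (\<Sum>i\<in>U. bb (l \<in> Tf i)) = 1}"
    have fU: "finite U" using U by (auto intro: finite_subset)
    have fV: "finite V" "V \<subseteq> {..<k}" unfolding V_def by auto
    have "wd n H' U = wd n H V"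
    proof
      fix j
      show "wd n H' U j = wd n H V j"
      proof (cases "j < n")
        case False thus ?thesis unfolding wd_def by simp
      next
        case True
        have "bb (odd (card {i\<in>U. H' i j})) = (\<Sum>i\<in>U. bb (H' i j))" by (rule card_parity[OF fU])
        also have "\<dots> = (\<Sum>i\<in>U. \<Sum>l\<in>Tf i. bb (H l j))"
        proof (rule sum.cong[OF refl])
          fix i assume "i \<in> U"
          hence "i < k" using U by auto
          thus "bb (H' i j) = (\<Sum>l\<in>Tf i. bb (H l j))" by (rule key)
        qed
        also have "\<dots> = (\<Sum>i\<in>U. \<Sum>l<k. bb (l \<in> Tf i) * bb (H l j))"
          using U Tf by (intro sum.cong refl sum_subset_ind) auto
        also have "\<dots> = (\<Sum>l<k. \<Sum>i\<in>U. bb (l \<in> Tf i) * bb (H l j))" by (rule sum.swap)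
        also have "\<dots> = (\<Sum>l<k. (\<Sum>i\<in>U. bb (l \<in> Tf i)) * bb (H l j))" by (simp only: sum_distrib_right)
        also have "\<dots> = (\<Sum>l<k. bb (l \<in> V) * bb (H l j))"
        proof (intro sum.cong refl)
          fix l assume "l \<in> {..<k}"
          hence "(\<Sum>i\<in>U. bb (l \<in> Tf i)) = bb (l \<in> V)" unfolding V_def
            by (subst bit_cases_of_bool) simp
          thus "(\<Sum>i\<in>U. bb (l \<in> Tf i)) * bb (H l j) = bb (l \<in> V) * bb (H l j)" by simp
        qed
        also have "\<dots> = (\<Sum>l\<in>V. bb (H l j))" using sum_subset_ind[of "{..<k}" V] fV by simp
        also have "\<dots> = bb (odd (card {l\<in>V. H l j}))" by (rule card_parity[OF fV(1), symmetric])
        finally show ?thesis unfolding wd_def by (simp add: of_bool_eq_iff)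
      qed
    qed
    thus "w \<in> code_of k n H" using U fV unfolding code_of_alt by auto
  qed
  have "code_of k n H' = code_of k n H"
    using card_subset_eq[OF finite_code sub] card_code[OF rH] card_code[OF rH'] by simp
  thus ?thesis using rH' unfolding H_def H'_def by metis
qed

lemma exists_perm:
  assumes fU: "finite U" and A: "A \<subseteq> U" and B: "B \<subseteq> U" and c: "card A = card B"
  shows "\<exists>\<sigma>. \<sigma> permutes U \<and> \<sigma> ` A = B"
proof -
  have fA: "finite A" and fB: "finite B" using A B fU by (auto intro: finite_subset)
  obtain f where f: "bij_betw f A B" using finite_same_card_bij[OF fA fB c] by blast
  have "card (U - A) = card (U - B)" using A B c fA fB by (simp add: card_Diff_subset)
  then obtain g where g: "bij_betw g (U - A) (U - B)" using finite_same_card_bij fU by blast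
  define \<sigma> where "\<sigma> x = (if x \<in> A then f x else if x \<in> U then g x else x)" for x
  have 1: "bij_betw \<sigma> A B" using f unfolding \<sigma>_def by (rule bij_betw_cong[THEN iffD1, rotated]) simp
  have 2: "bij_betw \<sigma> (U - A) (U - B)" using g unfolding \<sigma>_def by (rule bij_betw_cong[THEN iffD1, rotated]) simp
  have "bij_betw \<sigma> (A \<union> (U - A)) (B \<union> (U - B))" by (rule bij_betw_combine[OF 1 2]) blast
  moreover have "A \<union> (U - A) = U" "B \<union> (U - B) = U" using A B by auto
  ultimately have "bij_betw \<sigma> U U" by simp
  hence "\<sigma> permutes U" by (rule bij_imp_permutes) (use A in \<open>auto simp: \<sigma>_def\<close>)
  moreover have "\<sigma> ` A = B" using 1 by (simp add: bij_betw_def)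
  ultimately show ?thesis by blast
qed

lemma shift_perm:
  fixes m k :: nat and \<pi> :: "nat \<Rightarrow> nat"
  assumes p: "\<pi> permutes {..<k}"
  shows "(\<lambda>j. if m \<le> j \<and> j < m + k then m + \<pi> (j - m) else j) permutes {m..<m+k}"
proof -
  let ?p = "\<lambda>j. if m \<le> j \<and> j < m + k then m + \<pi> (j - m) else j"
  have b1: "bij_betw (\<lambda>j. j - m) {m..<m+k} {..<k}"
  proof (rule bij_betwI[where g="\<lambda>j. m + j"])
    show "(\<lambda>j. j - m) \<in> {m..<m+k} \<rightarrow> {..<k}" by (auto simp: Pi_iff)
    show "(\<lambda>j. m + j) \<in> {..<k} \<rightarrow> {m..<m+k}" by (auto simp: Pi_iff)
  qed auto
  have b2: "bij_betw \<pi> {..<k} {..<k}" using permutes_imp_bij[OF p] .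
  have b3: "bij_betw (\<lambda>j. m + j) {..<k} {m..<m+k}"
  proof (rule bij_betwI[where g="\<lambda>j. j - m"])
    show "(\<lambda>j. j - m) \<in> {m..<m+k} \<rightarrow> {..<k}" by (auto simp: Pi_iff)
    show "(\<lambda>j. m + j) \<in> {..<k} \<rightarrow> {m..<m+k}" by (auto simp: Pi_iff)
  qed auto
  have "bij_betw ((\<lambda>j. m + j) \<circ> (\<pi> \<circ> (\<lambda>j. j - m))) {m..<m+k} {m..<m+k}"
    by (rule bij_betw_trans[OF bij_betw_trans[OF b1 b2] b3])
  hence "bij_betw ?p {m..<m+k} {m..<m+k}"
    by (rule bij_betw_cong[THEN iffD1, rotated]) auto
  thus ?thesis by (rule bij_imp_permutes) auto
qed

lemma cols_rows:
  assumes c: "cols_indep k H I" and I: "I \<subseteq> {..<m}" and cI: "card I = k"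
  shows "rows_indep k m H"
proof -
  have fI: "finite I" using I by (rule finite_subset) simp
  have "\<forall>J\<subseteq>I. (\<forall>i\<in>{..<k}. (\<Sum>j\<in>J. bb (H i j)) = 0) \<longrightarrow> J = {}"
    using c cols_indep_bit[OF fI] by simp
  from sq_rows[OF _ fI _ this] cI
  have r: "\<forall>T\<subseteq>{..<k}. (\<forall>j\<in>I. (\<Sum>i\<in>T. bb (H i j)) = 0) \<longrightarrow> T = {}" by simp
  show ?thesis unfolding rows_indep_bit using r I by blast
qed




lemma part1:
  assumes t: "t \<ge> 2" and m: "m = (t - 1) * k"
    and rG: "rows_indep k m G" and cis: "is_CIS (t - 1) k (code_of k m G)" and gl: "in_GL k B"
  shows "is_CIS t k (code_of k (t * k) (hconcat m G B))"
proof -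
  have n: "t * k = m + k" using t m by (cases t) auto
  define H where "H = hconcat m G B"
  have rH: "rows_indep k (m + k) H" using rows_indep_ext[OF rG] unfolding H_def hconcat_def by simp
  have gH: "gen_matrix (m + k) k (code_of k (m + k) H) H" using rH unfolding gen_matrix_def by simp
  have gG: "gen_matrix m k (code_of k m G) G" using rG unfolding gen_matrix_def by simp
  obtain I where I: "\<forall>s<t - 1. info_set m k (code_of k m G) (I s)"
    "\<forall>s<t - 1. \<forall>s'<t - 1. s \<noteq> s' \<longrightarrow> I s \<inter> I s' = {}"
    "(\<Union>s<t - 1. I s) = {..<m}"
    using cis m unfolding is_CIS_def by auto
  have Is: "I s \<subseteq> {..<m} \<and> card (I s) = k \<and> cols_indep k G (I s)" if "s < t - 1" for s
    using I(1) that info_set_iff[OF gG] by blast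
  define I' where "I' s = (if s < t - 1 then I s else {m..<m+k})" for s
  have info: "info_set (m + k) k (code_of k (m + k) H) (I' s)" if s: "s < t" for s
  proof (cases "s < t - 1")
    case True
    have "cols_indep k H (I s) \<longleftrightarrow> cols_indep k G (I s)"
      using Is[OF True] by (intro cols_indep_cong) (auto simp: H_def hconcat_def)
    thus ?thesis using Is[OF True] True info_set_iff[OF gH] unfolding I'_def by auto
  next
    case False
    have "cols_indep k H {m..<m+k} \<longleftrightarrow> cols_indep k B {..<k}"
      by (rule cols_shift) (simp add: H_def hconcat_def)
    thus ?thesis using False GL_cols[OF gl] info_set_iff[OF gH] unfolding I'_def by auto
  qed
  have disj: "I' s \<inter> I' s' = {}" if "s < t" "s' < t" "s \<noteq> s'" for s s'
  proof (cases "s < t - 1 \<and> s' < t - 1")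
    case True thus ?thesis using I(2) that unfolding I'_def by auto
  next
    case False
    hence "s = t - 1 \<and> s' < t - 1 \<or> s' = t - 1 \<and> s < t - 1" using that by auto
    thus ?thesis
    proof
      assume a: "s = t - 1 \<and> s' < t - 1"
      hence "I s' \<subseteq> {..<m}" using Is by blast
      thus ?thesis using a unfolding I'_def by auto
    next
      assume a: "s' = t - 1 \<and> s < t - 1"
      hence "I s \<subseteq> {..<m}" using Is by blast
      thus ?thesis using a unfolding I'_def by auto
    qed
  qed
  have un: "(\<Union>s<t. I' s) = {..<m + k}"
  proof
    show "(\<Union>s<t. I' s) \<subseteq> {..<m + k}"
    proof
      fix x assume "x \<in> (\<Union>s<t. I' s)"
      then obtain s where s: "s < t" "x \<in> I' s" by auto
      show "x \<in> {..<m + k}"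
      proof (cases "s < t - 1")
        case True
        hence "I s \<subseteq> {..<m}" using Is by blast
        thus ?thesis using s True unfolding I'_def by auto
      next
        case False thus ?thesis using s unfolding I'_def by auto
      qed
    qed
  next
    show "{..<m + k} \<subseteq> (\<Union>s<t. I' s)"
    proof
      fix x assume x: "x \<in> {..<m + k}"
      show "x \<in> (\<Union>s<t. I' s)"
      proof (cases "x < m")
        case True
        then obtain s where "s < t - 1" "x \<in> I s" using I(3) by auto
        thus ?thesis unfolding I'_def by (intro UN_I[of s]) auto
      next
        case False
        hence "x \<in> I' (t - 1)" using x unfolding I'_def by auto
        thus ?thesis using t by (intro UN_I[of "t - 1"]) auto
      qed
    qed
  qed
  show ?thesis unfolding is_CIS_def n is_code_def
    using gH info disj un unfolding H_def by blast
qed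

lemma part2:
  assumes t: "t \<ge> 2" and m: "m = (t - 1) * k"
    and S_gen: "\<forall>G\<in>S. rows_indep k m G"
    and S_all: "\<forall>C. is_CIS (t - 1) k C \<longrightarrow> (\<exists>G\<in>S. code_equiv m C (code_of k m G))"
    and R_all: "\<forall>A. in_GL k A \<longrightarrow> (\<exists>B\<in>R. sim1 k A B)"
    and cis: "is_CIS t k C"
  shows "\<exists>G\<in>S. \<exists>B\<in>R. code_equiv (t * k) C (code_of k (t * k) (hconcat m G B))"
proof -
  define n where "n = t * k"
  have n: "n = m + k" using t m unfolding n_def by (cases t) auto
  obtain I where I: "\<forall>s<t. info_set n k C (I s)"
    "\<forall>s<t. \<forall>s'<t. s \<noteq> s' \<longrightarrow> I s \<inter> I s' = {}"
    "(\<Union>s<t. I s) = {..<n}"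
    using cis unfolding is_CIS_def n_def by auto
  have tl: "t - 1 < t" using t by simp
  have It: "I (t - 1) \<subseteq> {..<n}" "card (I (t - 1)) = k" using I(1) tl unfolding info_set_def by auto
  have cc: "card {m..<n} = card (I (t - 1))" using It(2) n by simp
  have sub: "{m..<n} \<subseteq> {..<n}" by auto
  obtain \<sigma> where \<sigma>: "\<sigma> permutes {..<n}" "\<sigma> ` {m..<n} = I (t - 1)"
    using exists_perm[OF finite_lessThan sub It(1) cc] by blast
  define D where "D = (\<lambda>w. w \<circ> \<sigma>) ` C"
  define J where "J s = inv \<sigma> ` I s" for s
  have eCD: "code_equiv n C D" unfolding code_equiv_def D_def using \<sigma>(1) by blast
  have iJ: "info_set n k D (J s)" if "s < t" for s
    unfolding D_def J_def using info_set_perm[OF \<sigma>(1)] I(1) that by blast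
  have injinv: "inj (inv \<sigma>)" using permutes_inj[OF permutes_inv[OF \<sigma>(1)]] .
  have Jt: "J (t - 1) = {m..<n}"
    unfolding J_def \<sigma>(2)[symmetric] image_image by (simp add: permutes_inverses(2)[OF \<sigma>(1)])
  have Jdisj: "J s \<inter> J s' = {}" if "s < t" "s' < t" "s \<noteq> s'" for s s'
    unfolding J_def using I(2) that image_Int[OF injinv, symmetric] by auto
  have Jun: "(\<Union>s<t. J s) = {..<n}"
    unfolding J_def using I(3) permutes_image[OF permutes_inv[OF \<sigma>(1)]]
    by (metis image_UN)
  have Jsub: "J s \<subseteq> {..<m}" if s: "s < t - 1" for s
  proof -
    have "J s \<subseteq> {..<n}" using iJ[of s] s unfolding info_set_def by auto
    moreover have "J s \<inter> {m..<n} = {}" using Jdisj[of s "t - 1"] s Jt by auto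
    ultimately show ?thesis
    proof (intro subsetI)
      fix x assume a: "J s \<subseteq> {..<n}" "J s \<inter> {m..<n} = {}" and x: "x \<in> J s"
      have "x < n" using a(1) x by auto
      moreover have "x \<notin> {m..<n}" using a(2) x by auto
      ultimately show "x \<in> {..<m}" by auto
    qed
  qed
  have Jun': "(\<Union>s<t - 1. J s) = {..<m}"
  proof
    show "(\<Union>s<t - 1. J s) \<subseteq> {..<m}" using Jsub by auto
  next
    show "{..<m} \<subseteq> (\<Union>s<t - 1. J s)"
    proof
      fix x assume x: "x \<in> {..<m}"
      hence "x \<in> (\<Union>s<t. J s)" using Jun n by auto
      then obtain s where s: "s < t" "x \<in> J s" by auto
      have "s \<noteq> t - 1" using s Jt x by auto
      thus "x \<in> (\<Union>s<t - 1. J s)" using s by auto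
    qed
  qed
  obtain H where gH: "gen_matrix n k D H" using iJ[OF tl] unfolding info_set_def by blast
  have t0: "0 < t - 1" using t by simp
  have J0: "J 0 \<subseteq> {..<m}" "card (J 0) = k" "cols_indep k H (J 0)"
    using info_set_iff[OF gH] iJ[of 0] t0 Jsub[OF t0] by auto
  have rH: "rows_indep k m H" by (rule cols_rows[OF J0(3) J0(1) J0(2)])
  define D' where "D' = code_of k m H"
  have gD': "gen_matrix m k D' H" using rH unfolding gen_matrix_def D'_def by simp
  have iD': "info_set m k D' (J s)" if s: "s < t - 1" for s
  proof -
    have "cols_indep k H (J s)" "card (J s) = k" using info_set_iff[OF gH] iJ[of s] s by auto
    thus ?thesis using info_set_iff[OF gD'] Jsub[OF s] by auto
  qed
  have icD': "is_code ((t - 1) * k) k D'" using gD' m unfolding is_code_def by blast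
  have dD': "\<forall>s<t - 1. \<forall>s'<t - 1. s \<noteq> s' \<longrightarrow> J s \<inter> J s' = {}"
  proof (intro allI impI)
    fix s s' assume "s < t - 1" "s' < t - 1" "s \<noteq> s'"
    thus "J s \<inter> J s' = {}" by (intro Jdisj) auto
  qed
  have iD'': "\<forall>s<t - 1. info_set ((t - 1) * k) k D' (J s)" using iD' m by blast
  have uD': "(\<Union>s<t - 1. J s) = {..<(t - 1) * k}" using Jun' m by simp
  have cisD': "is_CIS (t - 1) k D'"
    unfolding is_CIS_def using icD' dD' iD'' uD' by blast
  obtain G0 where G0: "G0 \<in> S" "code_equiv m D' (code_of k m G0)" using S_all cisD' by blast
  obtain \<tau> where \<tau>: "\<tau> permutes {..<m}" "code_of k m G0 = (\<lambda>w. w \<circ> \<tau>) ` D'"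
    using G0(2) unfolding code_equiv_def by blast
  have \<tau>n: "\<tau> permutes {..<n}" using permutes_subset[OF \<tau>(1)] n by auto
  define D2 where "D2 = (\<lambda>w. w \<circ> \<tau>) ` D"
  have eDD2: "code_equiv n D D2" unfolding code_equiv_def D2_def using \<tau>n by blast
  have DH: "D = code_of k n H" using gH unfolding gen_matrix_def by simp
  have D2H: "D2 = code_of k n (\<lambda>i j. H i (\<tau> j))" unfolding D2_def DH by (rule code_of_perm[OF \<tau>n, symmetric])
  have Hsplit: "(\<lambda>i j. H i (\<tau> j)) = hconcat m (\<lambda>i j. H i (\<tau> j)) (\<lambda>i j. H i (m + j))"
  proof (intro ext)
    fix i j
    show "H i (\<tau> j) = hconcat m (\<lambda>i j. H i (\<tau> j)) (\<lambda>i j. H i (m + j)) i j"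
    proof (cases "j < m")
      case False
      hence "\<tau> j = j" using permutes_not_in[OF \<tau>(1)] by simp
      thus ?thesis using False unfolding hconcat_def by simp
    qed (simp add: hconcat_def)
  qed
  have eG0K: "code_of k m G0 = code_of k m (\<lambda>i j. H i (\<tau> j))"
    using \<tau>(2) code_of_perm[OF \<tau>(1)] unfolding D'_def by simp
  obtain X where X: "code_of k n (hconcat m (\<lambda>i j. H i (\<tau> j)) (\<lambda>i j. H i (m + j))) = code_of k n (hconcat m G0 X)"
    "rows_indep k n (hconcat m G0 X)"
    using row_change[OF _ rows_indep_perm[OF \<tau>(1) rH] eG0K, of n "\<lambda>i j. H i (m + j)"] S_gen G0(1) n by auto
  have D2X: "D2 = code_of k n (hconcat m G0 X)" using D2H Hsplit X(1) by simp
  have gD2: "gen_matrix n k D2 (hconcat m G0 X)" using D2X X(2) unfolding gen_matrix_def by simp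
  have "inv \<tau> ` {m..<n} = {m..<n}"
  proof -
    have "\<forall>x\<in>{m..<n}. inv \<tau> x = x" using permutes_not_in[OF permutes_inv[OF \<tau>(1)]] by auto
    thus ?thesis by simp
  qed
  hence "info_set n k D2 {m..<n}" using info_set_perm[OF \<tau>n iJ[OF tl]] Jt unfolding D2_def by simp
  hence "cols_indep k (hconcat m G0 X) {m..<m+k}" using info_set_iff[OF gD2] n by simp
  hence "cols_indep k X {..<k}" by (subst (asm) cols_shift) (auto simp: hconcat_def)
  hence "in_GL k X" by (rule cols_GL)
  then obtain B \<pi> where B: "B \<in> R" "\<pi> permutes {..<k}" "\<forall>i<k. \<forall>j<k. X i j = B i (\<pi> j)"
    using R_all unfolding sim1_def by blast
  define \<pi>' where "\<pi>' j = (if m \<le> j \<and> j < m + k then m + \<pi> (j - m) else j)" for j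
  have ssub: "{m..<m+k} \<subseteq> {..<n}" using n by auto
  have p': "\<pi>' permutes {..<n}"
    using permutes_subset[OF shift_perm[OF B(2), of m] ssub] unfolding \<pi>'_def by simp
  define D3 where "D3 = code_of k n (hconcat m G0 B)"
  have "code_of k n (\<lambda>i j. hconcat m G0 B i (\<pi>' j)) = (\<lambda>w. w \<circ> \<pi>') ` D3"
    unfolding D3_def by (rule code_of_perm[OF p'])
  moreover have "code_of k n (\<lambda>i j. hconcat m G0 B i (\<pi>' j)) = code_of k n (hconcat m G0 X)"
  proof (rule code_of_cong, intro allI impI)
    fix i j assume i: "i < k" and j: "j < n"
    show "hconcat m G0 B i (\<pi>' j) = hconcat m G0 X i j"
    proof (cases "j < m")
      case True thus ?thesis unfolding \<pi>'_def hconcat_def by simp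
    next
      case False
      hence "j - m < k" using j n by simp
      thus ?thesis using False B(3) i j n unfolding \<pi>'_def hconcat_def by auto
    qed
  qed
  ultimately have "D2 = (\<lambda>w. w \<circ> \<pi>') ` D3" using D2X by simp
  hence "code_equiv n D3 D2" unfolding code_equiv_def using p' by blast
  hence "code_equiv n C D3"
    using code_equiv_trans[OF code_equiv_trans[OF eCD eDD2] code_equiv_sym] by blast
  thus ?thesis using G0(1) B(1) unfolding D3_def n_def by blast
qed




theorem proposition8:
  fixes k t :: nat and S R :: "bmat set"
  assumes "k \<ge> 1" and "t \<ge> 3"
    and S_gen: "\<forall>G\<in>S. rows_indep k ((t - 1) * k) G \<and>
                      is_CIS (t - 1) k (code_of k ((t - 1) * k) G)"
    and S_all: "\<forall>C. is_CIS (t - 1) k C \<longrightarrow>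
                   (\<exists>G\<in>S. code_equiv ((t - 1) * k) C (code_of k ((t - 1) * k) G))"
    and S_rep: "\<forall>G\<in>S. \<forall>G'\<in>S.
                   code_equiv ((t - 1) * k) (code_of k ((t - 1) * k) G) (code_of k ((t - 1) * k) G')
                   \<longrightarrow> G = G'"
    and R_GL: "\<forall>B\<in>R. in_GL k B"
    and R_all: "\<forall>A. in_GL k A \<longrightarrow> (\<exists>B\<in>R. sim1 k A B)"
    and R_rep: "\<forall>B\<in>R. \<forall>B'\<in>R. sim1 k B B' \<longrightarrow> B = B'"
  shows "let Sbar = {code_of k (t * k) (hconcat ((t - 1) * k) G B) | G B. G \<in> S \<and> B \<in> R} in
           (\<forall>C\<in>Sbar. is_CIS t k C) \<and>
           (\<forall>C. is_CIS t k C \<longrightarrow> (\<exists>D\<in>Sbar. code_equiv (t * k) C D)) \<and>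
           (\<exists>St \<subseteq> Sbar. \<forall>C. is_CIS t k C \<longrightarrow> (\<exists>!D. D \<in> St \<and> code_equiv (t * k) C D))"
proof -
  have t2: "t \<ge> 2" using assms(2) by simp
  define Sbar where "Sbar = {code_of k (t * k) (hconcat ((t - 1) * k) G B) | G B. G \<in> S \<and> B \<in> R}"
  have P1: "\<forall>C\<in>Sbar. is_CIS t k C"
    unfolding Sbar_def using part1[OF t2 refl] S_gen R_GL by blast
  have P2: "\<forall>C. is_CIS t k C \<longrightarrow> (\<exists>D\<in>Sbar. code_equiv (t * k) C D)"
  proof (intro allI impI)
    fix C assume "is_CIS t k C"
    from part2[OF t2 refl _ S_all R_all this] S_gen
    show "\<exists>D\<in>Sbar. code_equiv (t * k) C D" unfolding Sbar_def by blast
  qed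
  define rep where "rep D = (SOME E. E \<in> Sbar \<and> code_equiv (t * k) D E)" for D
  have rep_in: "rep D \<in> Sbar \<and> code_equiv (t * k) D (rep D)" if "D \<in> Sbar" for D
    unfolding rep_def by (rule someI[of _ D]) (simp add: that code_equiv_refl)
  have rep_eq: "rep D = rep D'" if "code_equiv (t * k) D D'" for D D'
  proof -
    have "(\<lambda>E. E \<in> Sbar \<and> code_equiv (t * k) D E) = (\<lambda>E. E \<in> Sbar \<and> code_equiv (t * k) D' E)"
      using that code_equiv_trans code_equiv_sym by (intro ext) blast
    thus ?thesis unfolding rep_def by simp
  qed
  have P3: "\<exists>St \<subseteq> Sbar. \<forall>C. is_CIS t k C \<longrightarrow> (\<exists>!D. D \<in> St \<and> code_equiv (t * k) C D)"
  proof (intro exI[of _ "rep ` Sbar"] conjI allI impI)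
    show "rep ` Sbar \<subseteq> Sbar" using rep_in by auto
  next
    fix C assume "is_CIS t k C"
    then obtain D where D: "D \<in> Sbar" "code_equiv (t * k) C D" using P2 by blast
    show "\<exists>!D. D \<in> rep ` Sbar \<and> code_equiv (t * k) C D"
    proof (rule ex1I[of _ "rep D"])
      show "rep D \<in> rep ` Sbar \<and> code_equiv (t * k) C (rep D)"
        using D rep_in code_equiv_trans by blast
    next
      fix E assume E: "E \<in> rep ` Sbar \<and> code_equiv (t * k) C E"
      then obtain D1 where D1: "D1 \<in> Sbar" "E = rep D1" by auto
      have "code_equiv (t * k) D1 E" using rep_in[OF D1(1)] D1(2) by simp
      hence "code_equiv (t * k) D1 D"
        using E D(2) code_equiv_trans code_equiv_sym by blast
      thus "E = rep D" using rep_eq D1(2) by simp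
    qed
  qed
  show ?thesis unfolding Let_def Sbar_def[symmetric] using P1 P2 P3 by blast
qed


end
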